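(* Let $p$ be a prime with $p\equiv 3\pmod 4$. Then for every pattern $w\in\{r,n\}^3$ of length $3$, the number of occurrences of $w$ in $\mathbb{Z}_p$ is either $\lfloor\frac{p-3}{8}\rfloor$ or $\lceil\frac{p-3}{8}\rceil$.
   Context: An element $x\in\mathbb{Z}_p\setminus\{0\}$ is a quadratic residue (denoted $r$) if $x\equiv y^2\pmod p$ for some integer $y$, and a nonresidue (denoted $n$) otherwise. For a word $w=w_0w_1\cdots w_{k-1}\in\{r,n\}^k$ (a pattern of length $k$), an occurrence of $w$ in $\mathbb{Z}_p$ is an element $a\in\mathbb{Z}_p$ such that the $k$ consecutive elements $a,a+1,\dots,a+(k-1)$ (computed in $\mathbb{Z}_p$) are all nonzero and, for each $0\le i\le k-1$, $a+i$ is a quadratic residue if $w_i=r$ and a nonresidue if $w_i=n$. The number of occurrences of $w$ is the number of such $a$. *)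

theory Defs
  imports "HOL-Number_Theory.Number_Theory"
begin

text \<open>Letters of a pattern: True stands for r (quadratic residue),
  False stands for n (nonresidue).\<close>

definition has_letter :: "int \<Rightarrow> int \<Rightarrow> bool \<Rightarrow> bool" where
  "has_letter p x b \<longleftrightarrow> x mod p \<noteq> 0 \<and> (QuadRes p x \<longleftrightarrow> b)"

definition occurrences :: "int \<Rightarrow> bool list \<Rightarrow> int set" where
  "occurrences p w = {a \<in> {0..<p}. \<forall>i < length w. has_letter p ((a + int i) mod p) (w ! i)}"

definition num_occurrences :: "int \<Rightarrow> bool list \<Rightarrow> nat" where
  "num_occurrences p w = card (occurrences p w)"

end

theory Submission
  imports Defs
begin

lemma small_cong_eq:
  fixes p x y :: int
  assumes "p > 2" "[x = y] (mod p)" "\<bar>x\<bar> \<le> 1" "\<bar>y\<bar> \<le> 1"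
  shows "x = y"
proof (rule ccontr)
  assume "x \<noteq> y"
  then have "x - y \<noteq> 0" by simp
  moreover have "p dvd (x - y)" using assms(2) by (simp add: cong_iff_dvd_diff)
  ultimately have "\<bar>p\<bar> \<le> \<bar>x - y\<bar>" by (rule dvd_imp_le_int)
  then show False using assms by linarith
qed

lemma dvd_small_eq:
  fixes p x :: int
  assumes "p dvd x" "\<bar>x\<bar> < p"
  shows "x = 0"
  using dvd_imp_le_int[of x p] assms by linarith

context
  fixes p :: int
  assumes pr: "prime p" and p2: "p > 2"
begin

definition chi :: "int \<Rightarrow> int" where "chi x = Legendre x p"

lemma chi_cong: "[x = y] (mod p) \<Longrightarrow> chi x = chi y"
proof -
  assume h: "[x = y] (mod p)"
  have 1: "[x = 0] (mod p) \<longleftrightarrow> [y = 0] (mod p)"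
    using h cong_sym cong_trans by blast
  have 2: "QuadRes p x \<longleftrightarrow> QuadRes p y"
    unfolding QuadRes_def using h cong_sym cong_trans by blast
  show ?thesis unfolding chi_def Legendre_def using 1 2 by simp
qed

lemma chi_mod: "chi (x mod p) = chi x"
  by (rule chi_cong) (simp add: cong_def)

lemma chi_range: "chi x = 0 \<or> chi x = 1 \<or> chi x = -1"
  unfolding chi_def Legendre_def by auto

lemma chi_abs: "\<bar>chi x\<bar> \<le> 1"
  using chi_range[of x] by auto

lemma chi_zero_iff: "chi x = 0 \<longleftrightarrow> p dvd x"
  unfolding chi_def Legendre_def by (auto simp: cong_0_iff)

lemma chi_euler: "[chi x = x ^ ((nat p - 1) div 2)] (mod p)"
proof -
  have "prime (nat p)" using pr p2 prime_int_nat_transfer[of p] by blast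
  moreover have "2 < nat p" using p2 by simp
  ultimately have "[Legendre x (int (nat p)) = x ^ ((nat p - 1) div 2)] (mod (int (nat p)))"
    by (rule euler_criterion)
  moreover have "int (nat p) = p" using p2 by simp
  ultimately show ?thesis unfolding chi_def by metis
qed

lemma chi_mult: "chi (x * y) = chi x * chi y"
proof (rule small_cong_eq[OF p2])
  have "[chi x * chi y = x ^ ((nat p - 1) div 2) * y ^ ((nat p - 1) div 2)] (mod p)"
    by (intro cong_mult chi_euler)
  then show "[chi (x * y) = chi x * chi y] (mod p)"
    using chi_euler[of "x*y"] unfolding power_mult_distrib using cong_sym cong_trans by blast
  show "\<bar>chi (x * y)\<bar> \<le> 1" by (rule chi_abs)
  show "\<bar>chi x * chi y\<bar> \<le> 1" using chi_range[of x] chi_range[of y] by auto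
qed

lemma chi_one: "chi 1 = 1"
proof -
  have "\<not> [1 = 0] (mod p)" using p2 by (auto simp: cong_def)
  moreover have "QuadRes p 1" unfolding QuadRes_def by (rule exI[of _ 1]) simp
  ultimately show ?thesis by (simp add: chi_def Legendre_def)
qed

lemma chi_zero: "chi 0 = 0" by (simp add: chi_zero_iff)

lemma chi_neg1:
  assumes "[p = 3] (mod 4)"
  shows "chi (-1) = -1"
proof (rule small_cong_eq[OF p2])
  have "p mod 4 = 3" using assms unfolding cong_def by simp
  moreover have "nat (p mod 4) = nat p mod nat 4" by (rule nat_mod_distrib) (use p2 in auto)
  ultimately have "nat p mod 4 = 3" by simp
  then have "nat p = 4 * (nat p div 4) + 3" using div_mult_mod_eq[of "nat p" 4] by linarith
  then have "((nat p - 1) div 2) = Suc (2 * (nat p div 4))" by linarith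
  then have "(-1::int) ^ ((nat p - 1) div 2) = -1" by simp
  then show "[chi (-1) = -1] (mod p)" using chi_euler[of "-1"] by simp
qed (use chi_abs in auto)

lemma reflect_sum:
  assumes "\<And>x. g (x mod p) = g x"
  shows "(\<Sum>a\<in>{0..<p}. g (c - a)) = (\<Sum>a\<in>{0..<p}. g a)"
proof -
  have bij: "bij_betw (\<lambda>a. (c - a) mod p) {0..<p} {0..<p}"
  proof (rule bij_betw_byWitness[where f'="\<lambda>a. (c - a) mod p"])
    show "\<forall>a\<in>{0..<p}. (c - (c - a) mod p) mod p = a"
      by (auto simp: mod_diff_right_eq)
    show "\<forall>a\<in>{0..<p}. (c - (c - a) mod p) mod p = a"
      by (auto simp: mod_diff_right_eq)
  qed (use p2 in auto)
  have "(\<Sum>a\<in>{0..<p}. g ((c - a) mod p)) = (\<Sum>a\<in>{0..<p}. g a)"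
    using sum.reindex_bij_betw[OF bij] .
  then show ?thesis using assms by simp
qed

lemma shift_sum:
  assumes "\<And>x. g (x mod p) = g x"
  shows "(\<Sum>a\<in>{0..<p}. g (a + c)) = (\<Sum>a\<in>{0..<p}. g a)"
proof -
  have bij: "bij_betw (\<lambda>a. (a + c) mod p) {0..<p} {0..<p}"
  proof (rule bij_betw_byWitness[where f'="\<lambda>a. (a - c) mod p"])
    show "\<forall>a\<in>{0..<p}. ((a + c) mod p - c) mod p = a"
      by (auto simp: mod_diff_left_eq)
    show "\<forall>a\<in>{0..<p}. ((a - c) mod p + c) mod p = a"
      by (auto simp: mod_add_left_eq)
  qed (use p2 in auto)
  have "(\<Sum>a\<in>{0..<p}. g ((a + c) mod p)) = (\<Sum>a\<in>{0..<p}. g a)"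
    using sum.reindex_bij_betw[OF bij] .
  then show ?thesis using assms by simp
qed

lemma chi_mod_add: "chi (x mod p + c) = chi (x + c)"
  by (metis chi_mod mod_add_left_eq)

lemma chi_neg:
  assumes "[p = 3] (mod 4)"
  shows "chi (- x) = - chi x"
  using chi_mult[of "-1" x] chi_neg1[OF assms] by simp

lemma sum_chi:
  assumes "[p = 3] (mod 4)"
  shows "(\<Sum>a\<in>{0..<p}. chi (a + c)) = 0"
proof -
  have "(\<Sum>a\<in>{0..<p}. chi (a + c)) = (\<Sum>a\<in>{0..<p}. chi a)"
    by (rule shift_sum) (rule chi_mod)
  also have "\<dots> = (\<Sum>a\<in>{0..<p}. chi (0 - a))"
    by (rule reflect_sum[symmetric]) (rule chi_mod)
  also have "\<dots> = - (\<Sum>a\<in>{0..<p}. chi a)"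
    using chi_neg[OF assms] by (simp add: sum_negf)
  finally have "(\<Sum>a\<in>{0..<p}. chi (a + c)) = - (\<Sum>a\<in>{0..<p}. chi a)" .
  moreover have "(\<Sum>a\<in>{0..<p}. chi (a + c)) = (\<Sum>a\<in>{0..<p}. chi a)"
    by (rule shift_sum) (rule chi_mod)
  ultimately show ?thesis by linarith
qed

lemma sum_chi3:
  assumes "[p = 3] (mod 4)"
  shows "(\<Sum>a\<in>{0..<p}. chi a * chi (a + 1) * chi (a + 2)) = 0"
proof -
  let ?g = "\<lambda>x. chi x * chi (x + 1) * chi (x + 2)"
  have per: "\<And>x. ?g (x mod p) = ?g x"
    using chi_mod chi_mod_add by simp
  have "(\<Sum>a\<in>{0..<p}. ?g a) = (\<Sum>a\<in>{0..<p}. ?g (-2 - a))"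
    by (rule reflect_sum[symmetric]) (rule per)
  also have "\<dots> = (\<Sum>a\<in>{0..<p}. - ?g a)"
  proof (rule sum.cong)
    fix a :: int
    have e1: "-2 - a = - (a + 2)" and e2: "-2 - a + 1 = - (a + 1)" and e3: "-2 - a + 2 = - a"
      by simp_all
    have c1: "chi (-2 - a) = - chi (a + 2)" using chi_neg[OF assms, of "a+2"] e1 by metis
    have c2: "chi (-2 - a + 1) = - chi (a + 1)" using chi_neg[OF assms, of "a+1"] e2 by metis
    have c3: "chi (-2 - a + 2) = - chi a" using chi_neg[OF assms, of "a"] e3 by metis
    show "?g (-2 - a) = - ?g a"
      by (simp only: c1 c2 c3) simp
  qed simp
  also have "\<dots> = - (\<Sum>a\<in>{0..<p}. ?g a)" by (simp add: sum_negf)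
  finally show ?thesis by linarith
qed

lemma sum_chi2:
  assumes p3: "[p = 3] (mod 4)" and nk: "\<not> p dvd k"
  shows "(\<Sum>a\<in>{0..<p}. chi a * chi (a + k)) = -1"
proof -
  define B where "B = {1..<p}"
  have AB: "{0..<p} = insert 0 B" using p2 by (auto simp: B_def)
  have B0: "0 \<notin> B" by (simp add: B_def)
  have ndB: "\<not> p dvd a" if "a \<in> B" for a
  proof
    assume "p dvd a"
    then have "p \<le> a" using that zdvd_imp_le[of p a] by (auto simp: B_def)
    then show False using that by (auto simp: B_def)
  qed
  have cop: "coprime a p" if "a \<in> B" for a
    using prime_imp_coprime[OF pr ndB[OF that]] by (simp add: coprime_commute)
  define iv where "iv a = (SOME y. [a * y = 1] (mod p))" for a
  have iv: "[a * iv a = 1] (mod p)" if "a \<in> B" for a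
    unfolding iv_def by (rule someI_ex) (rule cong_solve_coprime_int[OF cop[OF that]])
  have ivd: "p dvd (a * iv a - 1)" if "a \<in> B" for a
    using iv[OF that] by (simp add: cong_iff_dvd_diff)
  have p1: "\<not> p dvd 1" using p2 zdvd_imp_le[of p 1] by auto
  have ndiv: "\<not> p dvd iv a" if "a \<in> B" for a
  proof
    assume "p dvd iv a"
    then have "p dvd a * iv a" by simp
    then have "p dvd (a * iv a - (a * iv a - 1))" using ivd[OF that] by (rule dvd_diff)
    then show False using p1 by simp
  qed
  define phi where "phi a = (1 + k * iv a) mod p" for a
  have img: "phi ` B \<subseteq> {0..<p} - {1}"
  proof
    fix x assume "x \<in> phi ` B"
    then obtain a where a: "a \<in> B" "x = phi a" by auto
    have "x \<in> {0..<p}" using a p2 by (simp add: phi_def)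
    moreover have "x \<noteq> 1"
    proof
      assume "x = 1"
      then have "(1 + k * iv a) mod p = 1 mod p" using a p2 by (simp add: phi_def)
      then have "p dvd (1 + k * iv a - 1)" by (simp add: mod_eq_dvd_iff)
      then have "p dvd k * iv a" by simp
      then show False using nk ndiv[OF a(1)] prime_dvd_mult_iff[OF pr] by blast
    qed
    ultimately show "x \<in> {0..<p} - {1}" by simp
  qed
  have inj: "inj_on phi B"
  proof (rule inj_onI)
    fix a a' assume a: "a \<in> B" and a': "a' \<in> B" and eq: "phi a = phi a'"
    then have "(1 + k * iv a) mod p = (1 + k * iv a') mod p" by (simp add: phi_def)
    then have "p dvd (1 + k * iv a - (1 + k * iv a'))" by (simp add: mod_eq_dvd_iff)
    then have "p dvd k * (iv a - iv a')" by (simp add: algebra_simps)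
    then have d1: "p dvd (iv a - iv a')" using nk prime_dvd_mult_iff[OF pr] by blast
    have eqn: "a - a' = a * (- (a' * iv a' - 1)) + a' * (a * (- (iv a - iv a')) + (a * iv a - 1))"
      by (simp add: algebra_simps)
    have "p dvd a * (- (a' * iv a' - 1)) + a' * (a * (- (iv a - iv a')) + (a * iv a - 1))"
      using ivd[OF a] ivd[OF a'] d1 by (intro dvd_add dvd_mult dvd_minus_iff[THEN iffD2]) auto
    then have "p dvd (a - a')" using eqn by simp
    moreover have "\<bar>a - a'\<bar> < p" using a a' by (auto simp: B_def)
    ultimately have "a - a' = 0" by (rule dvd_small_eq)
    then show "a = a'" by simp
  qed
  have fin: "finite ({0..<p} - {1})" by simp
  have "card (phi ` B) = card B" using inj by (rule card_image)
  also have "\<dots> = card ({0..<p} - {1})" using p2 by (simp add: B_def)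
  finally have "phi ` B = {0..<p} - {1}"
    using card_subset_eq[OF fin img] by simp
  then have bij: "bij_betw phi B ({0..<p} - {1})" using inj by (simp add: bij_betw_def)
  have pw: "chi a * chi (a + k) = chi (phi a)" if a: "a \<in> B" for a
  proof -
    define y where "y = iv a"
    have "chi (phi a) = chi (1 + k * y)" by (simp add: phi_def y_def chi_mod)
    have "chi y \<noteq> 0" using ndiv[OF a] by (simp add: chi_zero_iff y_def)
    then have yy: "chi y * chi y = 1" using chi_range[of y] by auto
    have "[(a * y) * ((a * y) + k * y) = 1 * (1 + k * y)] (mod p)"
      using iv[OF a] unfolding y_def by (intro cong_mult cong_add cong_refl)
    moreover have "(a * y) * ((a * y) + k * y) = a * (a + k) * (y * y)"
      by (simp add: algebra_simps)
    ultimately have "chi (a * (a + k) * (y * y)) = chi (1 + k * y)"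
      using chi_cong by simp
    moreover have "chi (a * (a + k) * (y * y)) = chi a * chi (a + k)"
      using yy by (simp add: chi_mult)
    ultimately show ?thesis using \<open>chi (phi a) = chi (1 + k * y)\<close> by simp
  qed
  have "(\<Sum>a\<in>{0..<p}. chi a * chi (a + k)) = (\<Sum>a\<in>B. chi a * chi (a + k))"
    using AB B0 by (simp add: chi_zero B_def)
  also have "\<dots> = (\<Sum>a\<in>B. chi (phi a))" using pw by (rule sum.cong[OF refl])
  also have "\<dots> = (\<Sum>x\<in>{0..<p} - {1}. chi x)" using sum.reindex_bij_betw[OF bij] .
  also have "\<dots> = (\<Sum>x\<in>{0..<p}. chi x) - chi 1" using p2 by (simp add: sum_diff1)
  also have "\<dots> = -1" using sum_chi[OF p3, of 0] chi_one by simp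
  finally show ?thesis .
qed

end

lemma chi_eq: "prime p \<Longrightarrow> p > 2 \<Longrightarrow> chi p x = Legendre x p"
  by (simp add: chi_def)

lemma floor_ceil_close:
  fixes N q :: int
  assumes "\<bar>8 * N - q\<bar> \<le> 4"
  shows "N = \<lfloor>real_of_int q / 8\<rfloor> \<or> N = \<lceil>real_of_int q / 8\<rceil>"
proof (cases "8 * N \<ge> q")
  case True
  have "\<lceil>real_of_int q / 8\<rceil> = N"
  proof (rule ceiling_unique)
    have "real_of_int (8 * N - q) \<le> 4" using assms by linarith
    then show "real_of_int N - 1 < real_of_int q / 8" by simp
    have "real_of_int q \<le> real_of_int (8 * N)" using True by linarith
    then show "real_of_int q / 8 \<le> real_of_int N" by simp
  qed
  then show ?thesis by simp
next
  case False
  have "\<lfloor>real_of_int q / 8\<rfloor> = N"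
  proof (rule floor_unique)
    have "real_of_int (q - 8 * N) \<le> 4" using assms by linarith
    then show "real_of_int q / 8 < real_of_int N + 1" by simp
    have "real_of_int (8 * N) \<le> real_of_int q" using False by linarith
    then show "real_of_int N \<le> real_of_int q / 8" by simp
  qed
  then show ?thesis by simp
qed

lemma has_letter_chi:
  "has_letter p y b \<longleftrightarrow> Legendre y p = (if b then 1 else -1)"
  unfolding has_letter_def Legendre_def cong_def by auto

lemma ind8:
  fixes x0 x1 x2 e0 e1 e2 :: int
  assumes "x0 = 1 \<or> x0 = -1" "x1 = 1 \<or> x1 = -1" "x2 = 1 \<or> x2 = -1"
    "e0 = 1 \<or> e0 = -1" "e1 = 1 \<or> e1 = -1" "e2 = 1 \<or> e2 = -1"
  shows "8 * (if x0 = e0 \<and> x1 = e1 \<and> x2 = e2 then 1 else 0) = (1 + e0 * x0) * (1 + e1 * x1) * (1 + e2 * x2)"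
  using assms by auto

lemma final_bound:
  fixes c d e0 e1 e2 :: int
  assumes "c = 0 \<or> c = 1 \<or> c = -1" "d = 0 \<or> d = 1 \<or> d = -1"
    "e0 = 1 \<or> e0 = -1" "e1 = 1 \<or> e1 = -1" "e2 = 1 \<or> e2 = -1"
  shows "\<bar>3 - (e0 * e1 + e0 * e2 + e1 * e2) - ((1 + e1) * (1 + e2 * c) + (1 - e0) * (1 + e2) + (1 + e0 * d) * (1 - e1))\<bar> \<le> 4"
  using assms by auto

lemma all_less_3: "(\<forall>i<(3::nat). P i) \<longleftrightarrow> P 0 \<and> P 1 \<and> P 2"
  by (auto simp: numeral_3_eq_3 numeral_2_eq_2 less_Suc_eq)

theorem corollary2p5:
  fixes p :: int and w :: "bool list"
  assumes "prime p" and "[p = 3] (mod 4)" and "length w = 3"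
  shows "int (num_occurrences p w) = \<lfloor>real_of_int (p - 3) / 8\<rfloor>
       \<or> int (num_occurrences p w) = \<lceil>real_of_int (p - 3) / 8\<rceil>"
proof -
  have pp: "prime p" by (rule assms(1))
  have "p \<ge> 2" using prime_ge_2_int[OF pp] .
  moreover have "p \<noteq> 2" using assms(2) by (auto simp: cong_def)
  ultimately have p2: "p > 2" by simp
  obtain b0 b1 b2 where w: "w = [b0, b1, b2]"
    using assms(3) by (metis length_0_conv length_Suc_conv numeral_3_eq_3)
  define e where "e b = (if b then 1 else -1 :: int)" for b
  define X where "X x = chi p x" for x
  have Xmod: "X (x mod p) = X x" for x unfolding X_def using chi_mod[OF pp p2] .
  define A where "A = {0..<p}"
  define occ where "occ = occurrences p w"
  have occ_eq: "occ = {a\<in>A. X a = e b0 \<and> X (a + 1) = e b1 \<and> X (a + 2) = e b2}"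
  proof -
    have "has_letter p ((a + int i) mod p) b \<longleftrightarrow> X (a + int i) = e b" for a i b
      using Xmod[of "a + int i"] by (simp add: has_letter_chi X_def chi_eq[OF pp p2] e_def)
    then show ?thesis
      unfolding occ_def occurrences_def A_def w by (simp add: all_less_3[unfolded numeral_3_eq_3])
  qed
  have p3: "[p = 3] (mod 4)" by (rule assms(2))
  define e0 where "e0 = e b0"
  define e1 where "e1 = e b1"
  define e2 where "e2 = e b2"
  have er: "e b = 1 \<or> e b = -1" for b by (simp add: e_def)
  have Xr: "X x = 0 \<or> X x = 1 \<or> X x = -1" for x unfolding X_def by (rule chi_range[OF pp p2])
  have Xnz: "X y = 1 \<or> X y = -1" if "0 < y" "y < p" for y
  proof -
    have "\<not> p dvd y" using that zdvd_imp_le[of p y] by auto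
    then have "X y \<noteq> 0" unfolding X_def using chi_zero_iff[OF pp p2] by simp
    then show ?thesis using Xr[of y] by auto
  qed
  have X0: "X 0 = 0" unfolding X_def by (rule chi_zero[OF pp p2])
  have Xp: "X p = 0" unfolding X_def using chi_zero_iff[OF pp p2] by simp
  have X1: "X 1 = 1" unfolding X_def by (rule chi_one[OF pp p2])
  have Xp1: "X (p + 1) = 1" using Xmod[of "p+1"] X1 p2 by simp
  have Xm1: "X (p - 1) = -1"
  proof -
    have "[p - 1 = -1] (mod p)" by (simp add: cong_iff_dvd_diff)
    then show ?thesis unfolding X_def using chi_cong[OF pp p2] chi_neg1[OF pp p2 p3] by metis
  qed
  define f where "f a = (1 + e0 * X a) * (1 + e1 * X (a + 1)) * (1 + e2 * X (a + 2))" for a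
  define C where "C = {0, p - 1, p - 2}"
  have CA: "C \<subseteq> A" using p2 by (auto simp: C_def A_def)
  have finA: "finite A" by (simp add: A_def)
  have occA: "occ \<subseteq> A" using occ_eq by auto
  have k1: "int (card occ) = (\<Sum>a\<in>A. if a \<in> occ then 1 else 0)"
  proof -
    have "(\<Sum>a\<in>A. if a \<in> occ then 1 else 0) = (\<Sum>a\<in>A \<inter> occ. (1::int))"
      using sum.inter_restrict[OF finA, of "\<lambda>_. (1::int)" occ] by simp
    also have "A \<inter> occ = occ" using occA by auto
    finally show ?thesis by simp
  qed
  have k2: "8 * (if a \<in> occ then 1 else 0) = f a" if a: "a \<in> A - C" for a
  proof -
    have "1 \<le> a" "a \<le> p - 3" using a p2 by (auto simp: A_def C_def)
    then have "X a = 1 \<or> X a = -1" "X (a+1) = 1 \<or> X (a+1) = -1" "X (a+2) = 1 \<or> X (a+2) = -1"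
      using Xnz by auto
    moreover have "a \<in> occ \<longleftrightarrow> X a = e0 \<and> X (a + 1) = e1 \<and> X (a + 2) = e2"
      using a occ_eq by (auto simp: e0_def e1_def e2_def)
    ultimately show ?thesis unfolding f_def using ind8 er e0_def e1_def e2_def by simp
  qed
  have k3: "a \<notin> occ" if "a \<in> C" for a
  proof -
    have "e0 \<noteq> 0" "e1 \<noteq> 0" "e2 \<noteq> 0" using er e0_def e1_def e2_def by (metis zero_neq_one neg_0_equal_iff_equal)+
    then show ?thesis using that X0 Xp occ_eq by (auto simp: C_def e0_def e1_def e2_def)
  qed
  have "8 * int (card occ) = (\<Sum>a\<in>A. 8 * (if a \<in> occ then 1 else 0))"
    using k1 by (simp add: sum_distrib_left)
  also have "\<dots> = (\<Sum>a\<in>A - C. 8 * (if a \<in> occ then 1 else 0)) + (\<Sum>a\<in>C. 8 * (if a \<in> occ then 1 else 0))"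
    using sum.subset_diff[OF CA finA] by simp
  also have "(\<Sum>a\<in>C. 8 * (if a \<in> occ then 1 else 0)) = (0::int)"
    using k3 by simp
  also have "(\<Sum>a\<in>A - C. 8 * (if a \<in> occ then 1 else 0)) = (\<Sum>a\<in>A - C. f a)"
    using k2 by (rule sum.cong[OF refl])
  also have "\<dots> = (\<Sum>a\<in>A. f a) - (\<Sum>a\<in>C. f a)"
    using sum_diff[OF finA CA] by simp
  finally have main: "8 * int (card occ) = (\<Sum>a\<in>A. f a) - (\<Sum>a\<in>C. f a)" by simp
  have sC: "(\<Sum>a\<in>C. f a) = f 0 + f (p - 1) + f (p - 2)"
    using p2 by (simp add: C_def)
  have fexp: "f a = 1 + e0 * X a + e1 * X (a + 1) + e2 * X (a + 2)
      + (e0 * e1) * (X a * X (a + 1)) + (e0 * e2) * (X a * X (a + 2))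
      + (e1 * e2) * (X (a + 1) * X (a + 2)) + (e0 * e1 * e2) * (X a * X (a + 1) * X (a + 2))" for a
    unfolding f_def by (simp add: algebra_simps)
  have SX: "(\<Sum>a\<in>A. X (a + c)) = 0" for c
    unfolding A_def X_def by (rule sum_chi[OF pp p2 p3])
  have SX0: "(\<Sum>a\<in>A. X a) = 0" using SX[of 0] by simp
  have S01: "(\<Sum>a\<in>A. X a * X (a + 1)) = -1"
    unfolding A_def X_def using p2 zdvd_imp_le[of p 1] by (intro sum_chi2[OF pp p2 p3]) auto
  have S02: "(\<Sum>a\<in>A. X a * X (a + 2)) = -1"
    unfolding A_def X_def using p2 zdvd_imp_le[of p 2] by (intro sum_chi2[OF pp p2 p3]) auto
  have S12: "(\<Sum>a\<in>A. X (a + 1) * X (a + 2)) = -1"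
  proof -
    have "(\<Sum>a\<in>A. X (a + 1) * X (a + 1 + 1)) = (\<Sum>a\<in>A. X a * X (a + 1))"
      unfolding A_def
      by (rule shift_sum[OF pp p2, of "\<lambda>x. X x * X (x + 1)"])
         (simp add: X_def chi_mod[OF pp p2] chi_mod_add[OF pp p2])
    then show ?thesis using S01 by (simp add: add.assoc)
  qed
  have S3: "(\<Sum>a\<in>A. X a * X (a + 1) * X (a + 2)) = 0"
    unfolding A_def X_def by (rule sum_chi3[OF pp p2 p3])
  have sA: "(\<Sum>a\<in>A. f a) = p - (e0 * e1 + e0 * e2 + e1 * e2)"
  proof -
    have "(\<Sum>a\<in>A. f a) = (\<Sum>a\<in>A. 1) + e0 * (\<Sum>a\<in>A. X a) + e1 * (\<Sum>a\<in>A. X (a + 1))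
      + e2 * (\<Sum>a\<in>A. X (a + 2))
      + (e0 * e1) * (\<Sum>a\<in>A. X a * X (a + 1)) + (e0 * e2) * (\<Sum>a\<in>A. X a * X (a + 2))
      + (e1 * e2) * (\<Sum>a\<in>A. X (a + 1) * X (a + 2)) + (e0 * e1 * e2) * (\<Sum>a\<in>A. X a * X (a + 1) * X (a + 2))"
      unfolding fexp by (simp add: sum.distrib sum_distrib_left)
    also have "(\<Sum>a\<in>A. (1::int)) = p" using p2 by (simp add: A_def)
    finally show ?thesis using SX[of 1] SX[of 2] SX0 S01 S02 S12 S3 by simp
  qed
  have f0: "f 0 = (1 + e1) * (1 + e2 * X 2)" unfolding f_def using X0 X1 by simp
  have fm1: "f (p - 1) = (1 - e0) * (1 + e2)" unfolding f_def using Xm1 Xp Xp1 by (simp add: add.commute)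
  have fm2: "f (p - 2) = (1 + e0 * X (p - 2)) * (1 - e1)" unfolding f_def using Xm1 Xp
    by (simp add: algebra_simps)
  have "8 * int (card occ) - (p - 3) = 3 - (e0 * e1 + e0 * e2 + e1 * e2) - ((1 + e1) * (1 + e2 * X 2) + (1 - e0) * (1 + e2) + (1 + e0 * X (p - 2)) * (1 - e1))"
    using main sC sA f0 fm1 fm2 by simp
  moreover have "\<bar>3 - (e0 * e1 + e0 * e2 + e1 * e2) - ((1 + e1) * (1 + e2 * X 2) + (1 - e0) * (1 + e2) + (1 + e0 * X (p - 2)) * (1 - e1))\<bar> \<le> 4"
    by (rule final_bound) (use Xr er e0_def e1_def e2_def in auto)
  ultimately have "\<bar>8 * int (card occ) - (p - 3)\<bar> \<le> 4" by simp
  then show ?thesis using floor_ceil_close unfolding num_occurrences_def occ_def by blast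
qed

end
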